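(* Let $(G, I, O)$ be an open graph with $G=(V,E)$, and let $(g, \prec, \lambda)$ be an extended gflow of $(G,I,O)$. Let $(p_i)_{i=1,\dots,|V|}$ be a permutation of $V$ such that for all $i<j$ we have $p_i \not\succ p_j$ (i.e. a linear extension of $\prec$). Then for every $i \in \{1,\dots,|V|-1\}$, the cut-rank $\rho_G(\{p_1,\dots,p_i\})$ is at most $|O|$; that is, $p$ is a linear rank-decomposition of $G$ of width at most $|O|$. *)

theory Defs
  imports Main
begin

definition simple_graph :: "'a set \<Rightarrow> ('a \<Rightarrow> 'a \<Rightarrow> bool) \<Rightarrow> bool" where
  "simple_graph V E \<longleftrightarrow> finite V
     \<and> (\<forall>u v. E u v \<longrightarrow> u \<in> V \<and> v \<in> V)
     \<and> (\<forall>u v. E u v \<longrightarrow> E v u)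
     \<and> (\<forall>u. \<not> E u u)"

definition open_graph :: "'a set \<Rightarrow> ('a \<Rightarrow> 'a \<Rightarrow> bool) \<Rightarrow> 'a set \<Rightarrow> 'a set \<Rightarrow> bool" where
  "open_graph V E Inp Out \<longleftrightarrow> simple_graph V E \<and> Inp \<subseteq> V \<and> Out \<subseteq> V"

definition odd_nbh :: "'a set \<Rightarrow> ('a \<Rightarrow> 'a \<Rightarrow> bool) \<Rightarrow> 'a set \<Rightarrow> 'a set" where
  "odd_nbh V E A = {w \<in> V. odd (card {u \<in> A. E u w})}"

datatype plane = XY | XZ | YZ

definition ext_gflow ::
  "'a set \<Rightarrow> ('a \<Rightarrow> 'a \<Rightarrow> bool) \<Rightarrow> 'a set \<Rightarrow> 'a set \<Rightarrow>
   ('a \<Rightarrow> 'a set) \<Rightarrow> ('a \<Rightarrow> 'a \<Rightarrow> bool) \<Rightarrow> ('a \<Rightarrow> plane) \<Rightarrow> bool" where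
  "ext_gflow V E Inp Out g prec lam \<longleftrightarrow>
     \<comment> \<open>prec is a strict partial order on V\<close>
     (\<forall>u v. prec u v \<longrightarrow> u \<in> V \<and> v \<in> V)
     \<and> (\<forall>v. \<not> prec v v)
     \<and> (\<forall>u v w. prec u v \<longrightarrow> prec v w \<longrightarrow> prec u w)
     \<and> (\<forall>v \<in> V - Out.
          g v \<subseteq> V - Inp
        \<and> (\<forall>w \<in> g v. w \<noteq> v \<longrightarrow> prec v w)
        \<and> (\<forall>w \<in> odd_nbh V E (g v). w \<noteq> v \<longrightarrow> prec v w)
        \<and> (lam v = XY \<longrightarrow> v \<notin> g v \<and> v \<in> odd_nbh V E (g v))
        \<and> (lam v = XZ \<longrightarrow> v \<in> g v \<and> v \<in> odd_nbh V E (g v))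
        \<and> (lam v = YZ \<longrightarrow> v \<in> g v \<and> v \<notin> odd_nbh V E (g v)))"

text \<open>Linear independence over GF(2) of the rows indexed by S of the adjacency
  matrix restricted to columns C: no nonempty subset of rows sums to zero.\<close>

definition gf2_rows_indep :: "('a \<Rightarrow> 'a \<Rightarrow> bool) \<Rightarrow> 'a set \<Rightarrow> 'a set \<Rightarrow> bool" where
  "gf2_rows_indep E C S \<longleftrightarrow>
     (\<forall>T \<subseteq> S. T \<noteq> {} \<longrightarrow> (\<exists>c \<in> C. odd (card {t \<in> T. E t c})))"

text \<open>Cut-rank: GF(2)-rank of the A \<times> (V - A) submatrix of the adjacency matrix,
  i.e. the maximal number of linearly independent rows.\<close>

definition cut_rank :: "'a set \<Rightarrow> ('a \<Rightarrow> 'a \<Rightarrow> bool) \<Rightarrow> 'a set \<Rightarrow> nat" where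
  "cut_rank V E A = Max {card S | S. S \<subseteq> A \<and> gf2_rows_indep E (V - A) S}"

end

theory Submission imports Defs begin

definition sd :: "'b set \<Rightarrow> 'b set \<Rightarrow> 'b set" where
  "sd X Y = (X - Y) \<union> (Y - X)"

lemma card_sd:
  assumes "finite X" "finite Y"
  shows "card (sd X Y) + 2 * card (X \<inter> Y) = card X + card Y"
proof -
  have d: "(X - Y) \<inter> (Y - X) = {}" by blast
  have "card (sd X Y) = card (X - Y) + card (Y - X)"
    unfolding sd_def using assms d by (simp add: card_Un_disjoint)
  moreover have "card (X - Y) = card X - card (X \<inter> Y)"
    using assms by (simp add: card_Diff_subset_Int)
  moreover have "card (Y - X) = card Y - card (X \<inter> Y)"
    using assms by (simp add: card_Diff_subset_Int Int_commute)
  moreover have "card (X \<inter> Y) \<le> card X" "card (X \<inter> Y) \<le> card Y"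
    using assms by (simp_all add: card_mono)
  ultimately show ?thesis by simp
qed

lemma odd_sd:
  assumes "finite X" "finite Y"
  shows "odd (card (sd X Y)) \<longleftrightarrow> (odd (card X) \<noteq> odd (card Y))"
  using card_sd[OF assms] by presburger

lemma sd_Int: "sd X Z \<inter> G = sd (X \<inter> G) (Z \<inter> G)"
  by (auto simp: sd_def)

lemma sd_filter: "{t \<in> sd T T'. P t} = sd {t \<in> T. P t} {t \<in> T'. P t}"
  by (auto simp: sd_def)

lemma even_sum_parity:
  fixes f :: "'b \<Rightarrow> nat"
  assumes "finite C"
  shows "even (\<Sum>c\<in>C. f c) \<longleftrightarrow> even (card {c\<in>C. odd (f c)})"
  using assms
proof (induction C rule: finite_induct)
  case empty
  then show ?case by simp
next
  case (insert x F)
  show ?case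
  proof (cases "odd (f x)")
    case True
    then have "{c \<in> insert x F. odd (f c)} = insert x {c\<in>F. odd (f c)}" by auto
    moreover have "card (insert x {c\<in>F. odd (f c)}) = Suc (card {c\<in>F. odd (f c)})"
      using insert by simp
    ultimately show ?thesis using insert True by simp
  next
    case False
    then have "{c \<in> insert x F. odd (f c)} = {c\<in>F. odd (f c)}" by auto
    then show ?thesis using insert False by simp
  qed
qed

lemma card_filter_sum:
  assumes "finite T"
  shows "card {t\<in>T. P t} = (\<Sum>t\<in>T. if P t then 1 else 0)"
  using assms by (simp add: sum.If_cases Int_def)

lemma card_swap:
  assumes "finite T" "finite G"
  shows "(\<Sum>c\<in>G. card {t\<in>T. R t c}) = (\<Sum>t\<in>T. card {c\<in>G. R t c})"
proof -
  have "(\<Sum>c\<in>G. card {t\<in>T. R t c}) = (\<Sum>c\<in>G. \<Sum>t\<in>T. if R t c then 1 else 0)"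
    using assms by (simp add: card_filter_sum)
  also have "\<dots> = (\<Sum>t\<in>T. \<Sum>c\<in>G. if R t c then 1 else 0)"
    by (rule sum.swap)
  also have "\<dots> = (\<Sum>t\<in>T. card {c\<in>G. R t c})"
    using assms by (simp add: card_filter_sum)
  finally show ?thesis .
qed

theorem lemma1:
  fixes V :: "'a set" and E :: "'a \<Rightarrow> 'a \<Rightarrow> bool" and Inp Out :: "'a set"
    and g :: "'a \<Rightarrow> 'a set" and prec :: "'a \<Rightarrow> 'a \<Rightarrow> bool" and lam :: "'a \<Rightarrow> plane"
    and p :: "nat \<Rightarrow> 'a"
  assumes "open_graph V E Inp Out"
    and "ext_gflow V E Inp Out g prec lam"
    and "bij_betw p {1..card V} V"
    and "\<forall>i j. 1 \<le> i \<longrightarrow> i < j \<longrightarrow> j \<le> card V \<longrightarrow> \<not> prec (p j) (p i)"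
  shows "\<forall>i \<in> {1..card V - 1}. cut_rank V E (p ` {1..i}) \<le> card Out"
proof
  fix i assume i: "i \<in> {1..card V - 1}"
  have finV: "finite V" and Esym: "\<And>u v. E u v \<Longrightarrow> E v u" and EV: "\<And>u v. E u v \<Longrightarrow> u \<in> V \<and> v \<in> V"
    and OutV: "Out \<subseteq> V"
    using assms(1) unfolding open_graph_def simple_graph_def by blast+
  have precirr: "\<And>v. \<not> prec v v" and precV: "\<And>u v. prec u v \<Longrightarrow> u \<in> V \<and> v \<in> V"
    using assms(2) unfolding ext_gflow_def by blast+
  have gfl0: "\<forall>v \<in> V - Out.
          g v \<subseteq> V - Inp
        \<and> (\<forall>w \<in> g v. w \<noteq> v \<longrightarrow> prec v w)
        \<and> (\<forall>w \<in> odd_nbh V E (g v). w \<noteq> v \<longrightarrow> prec v w)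
        \<and> (lam v = XY \<longrightarrow> v \<notin> g v \<and> v \<in> odd_nbh V E (g v))
        \<and> (lam v = XZ \<longrightarrow> v \<in> g v \<and> v \<in> odd_nbh V E (g v))
        \<and> (lam v = YZ \<longrightarrow> v \<in> g v \<and> v \<notin> odd_nbh V E (g v))"
    using assms(2) unfolding ext_gflow_def by (elim conjE)
  have gsub: "\<And>v. v \<in> V - Out \<Longrightarrow> g v \<subseteq> V - Inp" using gfl0 by simp
  have gprec: "\<And>v w. v \<in> V - Out \<Longrightarrow> w \<in> g v \<Longrightarrow> w \<noteq> v \<Longrightarrow> prec v w"
    using gfl0 by simp
  have oprec: "\<And>v w. v \<in> V - Out \<Longrightarrow> w \<in> odd_nbh V E (g v) \<Longrightarrow> w \<noteq> v \<Longrightarrow> prec v w"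
    using gfl0 by simp
  have gXY: "\<And>v. v \<in> V - Out \<Longrightarrow> lam v = XY \<Longrightarrow> v \<in> odd_nbh V E (g v)"
    using gfl0 by simp
  have gXZ: "\<And>v. v \<in> V - Out \<Longrightarrow> lam v = XZ \<Longrightarrow> v \<in> g v"
    using gfl0 by simp
  have gYZ: "\<And>v. v \<in> V - Out \<Longrightarrow> lam v = YZ \<Longrightarrow> v \<in> g v"
    using gfl0 by simp
  define A where "A = p ` {1..i}"
  define B where "B = V - A"
  define D where "D = B - Out"
  have iV: "i \<le> card V" using i by auto
  have AV: "A \<subseteq> V" unfolding A_def using assms(3) iV
    by (auto simp: bij_betw_def)
  define idx where "idx = inv_into {1..card V} p"
  have idx1: "\<And>v. v \<in> V \<Longrightarrow> p (idx v) = v" unfolding idx_def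
    using assms(3) by (simp add: bij_betw_inv_into_right)
  have idx2: "\<And>v. v \<in> V \<Longrightarrow> idx v \<in> {1..card V}" unfolding idx_def
    using assms(3) by (metis bij_betw_def inv_into_into)
  have lin: "\<And>u v. prec u v \<Longrightarrow> idx u < idx v"
  proof -
    fix u v assume pr: "prec u v"
    then have uV: "u \<in> V" and vV: "v \<in> V" using precV by auto
    show "idx u < idx v"
    proof (rule ccontr)
      assume "\<not> idx u < idx v"
      then consider "idx v < idx u" | "idx u = idx v" by linarith
      then show False
      proof cases
        case 1 then show False using assms(4) idx1 idx2 uV vV pr by (metis atLeastAtMost_iff)
      next
        case 2 then have "u = v" using idx1 uV vV by metis
        then show False using pr precirr by simp
      qed
    qed
  qed
  have ord: "\<And>a b. a \<in> A \<Longrightarrow> b \<in> B \<Longrightarrow> \<not> prec b a"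
  proof
    fix a b assume a: "a \<in> A" and b: "b \<in> B" and pr: "prec b a"
    obtain k where k: "k \<in> {1..i}" "a = p k" using a A_def by auto
    have bV: "b \<in> V" using b B_def by auto
    have "idx b \<notin> {1..i}" using b idx1[OF bV] unfolding B_def A_def by (metis DiffD2 imageI)
    then have "i < idx b" using idx2[OF bV] by auto
    then show False using assms(4) k idx1 idx2 bV pr iV
      by (metis atLeastAtMost_iff order_le_less_trans)
  qed
  have gV: "\<And>w. w \<in> D \<Longrightarrow> g w \<subseteq> V" using gsub unfolding D_def B_def by blast
  have fing: "\<And>w. w \<in> D \<Longrightarrow> finite (g w)" using finite_subset[OF gV finV] by blast
  have gB: "\<And>w. w \<in> D \<Longrightarrow> g w \<subseteq> B"
  proof
    fix w c assume w: "w \<in> D" and c: "c \<in> g w"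
    have wD: "w \<in> V - Out" "w \<in> B" using w unfolding D_def B_def by auto
    show "c \<in> B"
    proof (cases "c = w")
      case True then show ?thesis using wD by simp
    next
      case False
      then have "prec w c" using gprec[OF wD(1)] c by blast
      then have "c \<notin> A" using ord wD(2) by blast
      then show ?thesis using gV[OF w] c unfolding B_def by auto
    qed
  qed
  have oddA: "\<And>w t. w \<in> D \<Longrightarrow> t \<in> A \<Longrightarrow> t \<notin> odd_nbh V E (g w)"
  proof
    fix w t assume w: "w \<in> D" and t: "t \<in> A" and tin: "t \<in> odd_nbh V E (g w)"
    have wD: "w \<in> V - Out" "w \<in> B" using w unfolding D_def B_def by auto
    have "t \<noteq> w" using t wD unfolding B_def by auto
    then have "prec w t" using oprec[OF wD(1) tin] by blast
    then show False using ord t wD by blast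
  qed
  define Lam where "Lam X = {w\<in>D. odd (card (X \<inter> g w))}" for X
  define Phi where "Phi T = {c\<in>B. odd (card {t\<in>T. E t c})}" for T
  have Lam_add: "\<And>X Z. Lam (sd X Z) = sd (Lam X) (Lam Z)"
  proof -
    fix X Z
    have "\<And>w. w \<in> D \<Longrightarrow> odd (card (sd X Z \<inter> g w)) \<longleftrightarrow> (odd (card (X \<inter> g w)) \<noteq> odd (card (Z \<inter> g w)))"
      using fing by (simp add: sd_Int odd_sd)
    then have "Lam (sd X Z) = {w\<in>D. odd (card (X \<inter> g w)) \<noteq> odd (card (Z \<inter> g w))}"
      unfolding Lam_def by auto
    then show "Lam (sd X Z) = sd (Lam X) (Lam Z)" by (auto simp: Lam_def sd_def)
  qed
  have Phi_add: "\<And>T T'. finite T \<Longrightarrow> finite T' \<Longrightarrow> Phi (sd T T') = sd (Phi T) (Phi T')"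
  proof -
    fix T T' :: "'a set" assume f: "finite T" "finite T'"
    have "\<And>c. odd (card {t\<in>sd T T'. E t c}) \<longleftrightarrow> (odd (card {t\<in>T. E t c}) \<noteq> odd (card {t\<in>T'. E t c}))"
      using f by (simp add: sd_filter odd_sd)
    then have "Phi (sd T T') = {c\<in>B. odd (card {t\<in>T. E t c}) \<noteq> odd (card {t\<in>T'. E t c})}"
      unfolding Phi_def by auto
    then show "Phi (sd T T') = sd (Phi T) (Phi T')" by (auto simp: Phi_def sd_def)
  qed
  have ker: "\<And>T. T \<subseteq> A \<Longrightarrow> Lam (Phi T) = {}"
  proof -
    fix T assume T: "T \<subseteq> A"
    have finT: "finite T" using finite_subset[OF order_trans[OF T AV] finV] .
    have "\<not> odd (card (Phi T \<inter> g w))" if w: "w \<in> D" for w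
    proof -
      have eq: "Phi T \<inter> g w = {c \<in> g w. odd (card {t\<in>T. E t c})}"
        using gB[OF w] unfolding Phi_def by auto
      have "(\<Sum>c\<in>g w. card {t\<in>T. E t c}) = (\<Sum>t\<in>T. card {c\<in>g w. E t c})"
        using card_swap[OF finT fing[OF w]] .
      moreover have "even (card {c\<in>g w. E t c})" if t: "t \<in> T" for t
      proof -
        have sy: "\<And>c. E t c = E c t" using Esym by blast
        have "{c\<in>g w. E t c} = {u\<in>g w. E u t}" by (simp only: sy)
        moreover have "t \<in> V" using t T AV by blast
        moreover have "t \<notin> odd_nbh V E (g w)" using oddA[OF w] t T by blast
        ultimately show ?thesis unfolding odd_nbh_def by simp
      qed
      ultimately have ev: "even (\<Sum>c\<in>g w. card {t\<in>T. E t c})"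
        by (simp only:) (rule dvd_sum, blast)
      have "even (card {c \<in> g w. odd (card {t\<in>T. E t c})})"
        using ev even_sum_parity[OF fing[OF w], of "\<lambda>c. card {t\<in>T. E t c}"] by simp
      then show ?thesis using eq by simp
    qed
    then show "Lam (Phi T) = {}" unfolding Lam_def by blast
  qed
  have xw: "\<And>w. w \<in> D \<Longrightarrow> \<exists>x \<subseteq> B. w \<in> Lam x \<and> (\<forall>w'\<in>Lam x. w' = w \<or> prec w' w)"
  proof -
    fix w assume w: "w \<in> D"
    have wD: "w \<in> V - Out" "w \<in> B" "w \<in> V" using w unfolding D_def B_def by auto
    show "\<exists>x \<subseteq> B. w \<in> Lam x \<and> (\<forall>w'\<in>Lam x. w' = w \<or> prec w' w)"
    proof (cases "w \<in> g w")
      case True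
      have "w \<in> Lam {w}" using True w unfolding Lam_def by simp
      moreover have "\<forall>w'\<in>Lam {w}. w' = w \<or> prec w' w"
      proof
        fix w' assume "w' \<in> Lam {w}"
        then have w'0: "w' \<in> D" "odd (card ({w} \<inter> g w'))" unfolding Lam_def by auto
        have "w \<in> g w'"
        proof (rule ccontr)
          assume "w \<notin> g w'"
          then have "{w} \<inter> g w' = {}" by blast
          then show False using w'0 by simp
        qed
        note w' = w'0(1) this
        have "w' \<in> V - Out" using w' unfolding D_def B_def by auto
        then have h: "\<forall>x\<in>g w'. x \<noteq> w' \<longrightarrow> prec w' x" using gprec by blast
        show "w' = w \<or> prec w' w" using h w'(2) by auto
      qed
      ultimately show ?thesis using wD by blast
    next
      case False
      then have "lam w = XY" using gXZ[OF wD(1)] gYZ[OF wD(1)] by (cases "lam w") auto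
      then have wodd: "w \<in> odd_nbh V E (g w)" using gXY[OF wD(1)] by blast
      define x where "x = {c\<in>B. E w c}"
      have key: "w' \<in> Lam x \<longleftrightarrow> w' \<in> D \<and> w \<in> odd_nbh V E (g w')" for w'
      proof (cases "w' \<in> D")
        case True
        have "x \<inter> g w' = {u\<in>g w'. E u w}" using gB[OF True] Esym unfolding x_def by blast
        then show ?thesis using True wD unfolding Lam_def odd_nbh_def by auto
      next
        case False then show ?thesis unfolding Lam_def by auto
      qed
      have "w \<in> Lam x" using key w wodd by simp
      moreover have "\<forall>w'\<in>Lam x. w' = w \<or> prec w' w"
      proof
        fix w' assume "w' \<in> Lam x"
        then have w': "w' \<in> D" "w \<in> odd_nbh V E (g w')" using key by auto
        have "w' \<in> V - Out" using w' unfolding D_def B_def by auto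
        then have h: "\<forall>x\<in>odd_nbh V E (g w'). x \<noteq> w' \<longrightarrow> prec w' x" using oprec by blast
        show "w' = w \<or> prec w' w" using h w'(2) by auto
      qed
      moreover have "x \<subseteq> B" unfolding x_def by auto
      ultimately show ?thesis by blast
    qed
  qed
  have LamD: "\<And>X. Lam X \<subseteq> D" unfolding Lam_def by auto
  have surj_n: "\<forall>Y. Y \<subseteq> D \<longrightarrow> (\<forall>y\<in>Y. idx y < n) \<longrightarrow> (\<exists>X\<subseteq>B. Lam X = Y)" for n
  proof (induction n)
    case 0
    have "Lam {} = {}" unfolding Lam_def by simp
    then show ?case by auto
  next
    case (Suc n)
    show ?case
    proof (intro allI impI)
      fix Y assume Y: "Y \<subseteq> D" and lt: "\<forall>y\<in>Y. idx y < Suc n"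
      show "\<exists>X\<subseteq>B. Lam X = Y"
      proof (cases "\<forall>y\<in>Y. idx y < n")
        case True then show ?thesis using Suc.IH Y by blast
      next
        case False
        then obtain w where wY: "w \<in> Y" and wn: "idx w = n" using lt by (metis less_SucE)
        have wD: "w \<in> D" using wY Y by blast
        obtain x where x: "x \<subseteq> B" "w \<in> Lam x" "\<forall>w'\<in>Lam x. w' = w \<or> prec w' w"
          using xw[OF wD] by blast
        define Y' where "Y' = sd Y (Lam x)"
        have Y'D: "Y' \<subseteq> D" unfolding Y'_def sd_def using Y LamD by blast
        have "\<forall>y\<in>Y'. idx y < n"
        proof
          fix y assume y: "y \<in> Y'"
          have yV: "y \<in> V" using y Y'D unfolding D_def B_def by auto
          have wV: "w \<in> V" using wD unfolding D_def B_def by auto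
          show "idx y < n"
          proof (cases "y \<in> Y")
            case True
            then have "y \<noteq> w" using y x(2) unfolding Y'_def sd_def by auto
            then have "idx y \<noteq> n" using wn idx1 yV wV by metis
            then show ?thesis using lt True by fastforce
          next
            case False
            then have "y \<in> Lam x" "y \<noteq> w" using y wY unfolding Y'_def sd_def by auto
            then have "prec y w" using x(3) by blast
            then show ?thesis using lin wn by blast
          qed
        qed
        then obtain X' where X': "X' \<subseteq> B" "Lam X' = Y'" using Suc.IH Y'D by blast
        have "Lam (sd X' x) = Y" using Lam_add X'(2) unfolding Y'_def sd_def by auto
        moreover have "sd X' x \<subseteq> B" using X' x unfolding sd_def by auto
        ultimately show ?thesis by blast
      qed
    qed
  qed
  have surj: "\<And>Y. Y \<subseteq> D \<Longrightarrow> \<exists>X\<subseteq>B. Lam X = Y"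
  proof -
    fix Y assume Y: "Y \<subseteq> D"
    have "\<forall>y\<in>Y. idx y < Suc (card V)"
      using Y idx2 unfolding D_def B_def by (meson DiffD1 atLeastAtMost_iff less_Suc_eq_le subsetD)
    then show "\<exists>X\<subseteq>B. Lam X = Y" using surj_n Y by blast
  qed
  define sigma where "sigma Y = (SOME X. X \<subseteq> B \<and> Lam X = Y)" for Y
  have sigma: "\<And>Y. Y \<subseteq> D \<Longrightarrow> sigma Y \<subseteq> B \<and> Lam (sigma Y) = Y"
    unfolding sigma_def using surj by (metis (mono_tags, lifting) someI_ex)
  have finB: "finite B" using finV B_def by simp
  have finD: "finite D" using finB D_def by simp
  have bound: "card S \<le> card Out" if S: "S \<subseteq> A" and ind: "gf2_rows_indep E (V - A) S" for S
  proof -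
    have finS: "finite S" using finite_subset[OF order_trans[OF S AV] finV] .
    define F where "F = (\<lambda>(T, Y). sd (Phi T) (sigma Y))"
    have inj: "inj_on F (Pow S \<times> Pow D)"
    proof (rule inj_onI)
      fix a b assume a: "a \<in> Pow S \<times> Pow D" and b: "b \<in> Pow S \<times> Pow D" and eq: "F a = F b"
      obtain T Y where aa: "a = (T, Y)" by fastforce
      obtain T' Y' where bb: "b = (T', Y')" by fastforce
      have T: "T \<subseteq> S" "Y \<subseteq> D" "T' \<subseteq> S" "Y' \<subseteq> D" using a b aa bb by auto
      have LF: "Lam (sd (Phi U) (sigma Z)) = Z" if "U \<subseteq> S" "Z \<subseteq> D" for U Z
      proof -
        have "Lam (sd (Phi U) (sigma Z)) = sd (Lam (Phi U)) (Lam (sigma Z))" by (rule Lam_add)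
        also have "\<dots> = sd {} Z" using ker[of U] sigma[of Z] that S by auto
        finally show ?thesis by (simp add: sd_def)
      qed
      have eq2: "sd (Phi T) (sigma Y) = sd (Phi T') (sigma Y')" using eq aa bb F_def by simp
      have YY: "Y = Y'" using LF[OF T(1,2)] LF[OF T(3,4)] eq2 by simp
      then have PP: "Phi T = Phi T'" using eq2 unfolding sd_def by blast
      have fT: "finite T" "finite T'" using finite_subset[OF T(1) finS] finite_subset[OF T(3) finS] by auto
      have P0: "Phi (sd T T') = {}" using Phi_add[OF fT] PP unfolding sd_def by simp
      have "sd T T' = {}"
      proof (rule ccontr)
        assume ne: "sd T T' \<noteq> {}"
        have "sd T T' \<subseteq> S" using T unfolding sd_def by auto
        then obtain c where "c \<in> V - A" "odd (card {t \<in> sd T T'. E t c})"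
          using ind ne unfolding gf2_rows_indep_def by blast
        then have "c \<in> Phi (sd T T')" unfolding Phi_def B_def by simp
        then show False using P0 by simp
      qed
      then have "T = T'" unfolding sd_def by blast
      then show "a = b" using aa bb YY by simp
    qed
    have img: "F ` (Pow S \<times> Pow D) \<subseteq> Pow B"
      using sigma unfolding F_def Phi_def sd_def by auto
    have "card (Pow S \<times> Pow D) \<le> card (Pow B)"
      using card_inj_on_le[OF inj img] finB by simp
    then have c1: "2 ^ card S * 2 ^ card D \<le> (2::nat) ^ card B"
      using finS finD finB by (simp add: card_cartesian_product card_Pow)
    have cD: "card D = card B - card (B \<inter> Out)" unfolding D_def
      using finB by (simp add: card_Diff_subset_Int)
    have cle: "card (B \<inter> Out) \<le> card B" using finB by (simp add: card_mono)
    have "card B = card (B \<inter> Out) + card D" using cD cle by simp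
    then have "2 ^ card S * 2 ^ card D \<le> (2::nat) ^ card (B \<inter> Out) * 2 ^ card D"
      using c1 by (simp add: power_add)
    then have "(2::nat) ^ card S \<le> 2 ^ card (B \<inter> Out)" by simp
    then have "card S \<le> card (B \<inter> Out)" by simp
    moreover have "card (B \<inter> Out) \<le> card Out"
      using finite_subset[OF OutV finV] by (simp add: card_mono)
    ultimately show ?thesis by simp
  qed
  define R where "R = {card S | S. S \<subseteq> A \<and> gf2_rows_indep E (V - A) S}"
  have "R \<subseteq> card ` Pow A" unfolding R_def by auto
  moreover have "finite (card ` Pow A)" using finite_subset[OF AV finV] by simp
  ultimately have finR: "finite R" by (rule finite_subset)
  have "0 \<in> R" unfolding R_def gf2_rows_indep_def by force
  then have "R \<noteq> {}" by blast
  moreover have "\<forall>r\<in>R. r \<le> card Out" unfolding R_def using bound by blast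
  ultimately have "Max R \<le> card Out" using finR by simp
  then show "cut_rank V E (p ` {1..i}) \<le> card Out"
    unfolding cut_rank_def R_def A_def by simp
qed

end
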